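(* Let $n\ge 2$ and $m$ be integers with $(n-1)^2\le m< n(n-1)$. Among all simple directed graphs with $n$ vertices and $m$ arcs, the maximal algebraic connectivity is $n-1$, and such a graph $\mathbb G$ has algebraic connectivity $n-1$ if and only if its complement $\overline{\mathbb G}$ is a directed forest consisting of $m-n(n-2)$ directed trees.
   Context: A simple directed graph has no self-arcs and no repeated arcs; an arc $(j,i)$ goes from $j$ to $i$. The (in-degree) Laplacian of $\mathbb G$ on vertices $\{1,\dots,n\}$ is $L(\mathbb G)=D-A$, $D$ the diagonal matrix of in-degrees, $A_{ij}=1$ if $(j,i)$ is an arc and $0$ otherwise. The algebraic connectivity $a(\mathbb G)$ is the second smallest real part among the $n$ eigenvalues of $L(\mathbb G)$ counted with algebraic multiplicity (the smallest is always $0$). The complement $\overline{\mathbb G}$ is the simple directed graph on the same vertex set whose arcs are exactly the ordered pairs $(i,j)$, $i\ne j$, that are not arcs of $\mathbb G$. A vertex $r$ is a root if there is a directed path from $r$ to every other vertex; a directed tree on $k$ vertices is a directed graph with a root and $k-1$ arcs (a single vertex is a directed tree). A directed forest is a vertex-disjoint union of directed trees covering all vertices, with no arcs between different trees. *)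

theory Defs
  imports "Jordan_Normal_Form.Char_Poly" "HOL-Library.Multiset" "HOL-Library.Disjoint_Sets"
begin

text \<open>Directed graphs on the vertex set {0..<n}, given by their arc set;
  an arc (j,i) goes from j to i.\<close>

definition simple_digraph :: "nat \<Rightarrow> (nat \<times> nat) set \<Rightarrow> bool" where
  "simple_digraph n A \<longleftrightarrow> A \<subseteq> {0..<n} \<times> {0..<n} \<and> (\<forall>i. (i, i) \<notin> A)"

definition in_degree :: "(nat \<times> nat) set \<Rightarrow> nat \<Rightarrow> nat" where
  "in_degree A i = card {k. (k, i) \<in> A}"

definition laplacian :: "nat \<Rightarrow> (nat \<times> nat) set \<Rightarrow> complex mat" where
  "laplacian n A = mat n n (\<lambda>(i, j).
      if i = j then of_nat (in_degree A i)
      else if (j, i) \<in> A then -1 else 0)"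

text \<open>Eigenvalues with algebraic multiplicity = roots of the characteristic
  polynomial with multiplicity; the algebraic connectivity is the second
  smallest real part (index 1 of the sorted list of real parts).\<close>
definition alg_conn :: "nat \<Rightarrow> (nat \<times> nat) set \<Rightarrow> real" where
  "alg_conn n A =
     sorted_list_of_multiset (image_mset Re (proots (char_poly (laplacian n A)))) ! 1"

definition complement :: "nat \<Rightarrow> (nat \<times> nat) set \<Rightarrow> (nat \<times> nat) set" where
  "complement n A = {(i, j). i < n \<and> j < n \<and> i \<noteq> j \<and> (i, j) \<notin> A}"

definition directed_tree :: "nat set \<Rightarrow> (nat \<times> nat) set \<Rightarrow> bool" where
  "directed_tree S E \<longleftrightarrow> E \<subseteq> S \<times> S \<and>
     (\<exists>r\<in>S. \<forall>v\<in>S. (r, v) \<in> E\<^sup>*) \<and> card E = card S - 1"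

definition directed_forest :: "nat \<Rightarrow> (nat \<times> nat) set \<Rightarrow> nat \<Rightarrow> bool" where
  "directed_forest n E k \<longleftrightarrow>
     (\<exists>P. partition_on {0..<n} P \<and> card P = k \<and>
          (\<forall>(i, j)\<in>E. \<exists>S\<in>P. i \<in> S \<and> j \<in> S) \<and>
          (\<forall>S\<in>P. directed_tree S (E \<inter> S \<times> S)))"

end

theory Submission
  imports Defs "Jordan_Normal_Form.Schur_Decomposition"
begin
definition redm :: "'a::comm_ring_1 mat \<Rightarrow> 'a mat" where
 "redm A = mat (dim_row A - 1) (dim_row A - 1) (\<lambda>(i,j). A $$ (Suc i, Suc j) - A $$ (0, Suc j))"

definition Pm :: "nat \<Rightarrow> 'a::comm_ring_1 mat" where
 "Pm n = mat n n (\<lambda>(i,j). if j = 0 \<or> i = j then 1 else 0)"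
definition Qm :: "nat \<Rightarrow> 'a::comm_ring_1 mat" where
 "Qm n = mat n n (\<lambda>(i,j). if i = j then 1 else if j = 0 then -1 else 0)"

lemma PQ: "Pm n * Qm n = (1\<^sub>m n :: 'a::comm_ring_1 mat)"
proof (rule eq_matI)
  fix i j assume ij: "i < dim_row (1\<^sub>m n :: 'a mat)" "j < dim_col (1\<^sub>m n :: 'a mat)"
  hence i: "i < n" and j: "j < n" by auto
  have "(Pm n * Qm n :: 'a mat) $$ (i,j) = (\<Sum>l\<in>{0..<n}. (if l = 0 \<or> i = l then 1 else 0) * (if l = j then 1 else if j = 0 then -1 else (0::'a)))"
    using i j by (simp add: Pm_def Qm_def scalar_prod_def)
  also have "\<dots> = (if i = j then 1 else 0)"
  proof (cases "j = 0")
    case True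
    then show ?thesis using i j
      apply (cases "i = 0")
      apply (simp add: sum.remove[of "{0..<n}" 0] )
      apply (simp add: sum.remove[of "{0..<n}" 0] sum.remove[of "{0..<n} - {0}" i] )
      done
  next
    case False
    have "(\<Sum>l\<in>{0..<n}. (if l = 0 \<or> i = l then 1 else 0) * (if l = j then 1 else if j = 0 then -1 else (0::'a)))
       = (\<Sum>l\<in>{0..<n}. if l = j then (if i = j then 1 else 0) else 0)"
      by (rule sum.cong, auto simp: False)
    then show ?thesis using i j by simp
  qed
  finally show "(Pm n * Qm n :: 'a mat) $$ (i,j) = 1\<^sub>m n $$ (i,j)" using i j by simp
qed (auto simp: Pm_def Qm_def)

lemma Qsum: fixes i n :: nat assumes i: "i < n"
  shows "(\<Sum>l\<in>{0..<n}. (if i = l then 1 else if l = 0 then -1 else (0::'a::comm_ring_1)) * x l)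
     = (if i = 0 then x 0 else x i - x 0)"
proof (cases "i = 0")
  case True
  have "(\<Sum>l\<in>{0..<n}. (if i = l then 1 else if l = 0 then -1 else (0::'a)) * x l)
       = (\<Sum>l\<in>{0..<n}. if l = 0 then x 0 else 0)"
    by (rule sum.cong, auto simp: True)
  also have "\<dots> = x 0" using i by (simp add: sum.delta)
  finally show ?thesis using True by simp
next
  case False
  have "(\<Sum>l\<in>{0..<n}. (if i = l then 1 else if l = 0 then -1 else (0::'a)) * x l)
       = (\<Sum>l\<in>{0..<n}. (if l = i then x i else 0) - (if l = 0 then x 0 else 0))"
    by (rule sum.cong, auto simp: False)
  also have "\<dots> = x i - x 0" using i False by (simp add: sum_subtractf)
  finally show ?thesis using False by simp
qed

lemma Psum: fixes j n :: nat assumes j: "j < n"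
  shows "(\<Sum>l\<in>{0..<n}. x l * (if j = 0 \<or> l = j then 1 else (0::'a::comm_ring_1)))
     = (if j = 0 then (\<Sum>l\<in>{0..<n}. x l) else x j)"
proof (cases "j = 0")
  case False
  have "(\<Sum>l\<in>{0..<n}. x l * (if j = 0 \<or> l = j then 1 else (0::'a)))
       = (\<Sum>l\<in>{0..<n}. if l = j then x j else 0)"
    by (rule sum.cong, auto simp: False)
  also have "\<dots> = x j" using j by (simp add: sum.delta)
  finally show ?thesis using False by simp
qed simp

lemma QP: "Qm n * Pm n = (1\<^sub>m n :: 'a::comm_ring_1 mat)"
proof (rule eq_matI)
  fix i j assume ij: "i < dim_row (1\<^sub>m n :: 'a mat)" "j < dim_col (1\<^sub>m n :: 'a mat)"
  hence i: "i < n" and j: "j < n" by auto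
  have "(Qm n * Pm n :: 'a mat) $$ (i,j) = (\<Sum>l\<in>{0..<n}. (if i = l then 1 else if l = 0 then -1 else (0::'a)) * (if j = 0 \<or> l = j then 1 else 0))"
    using i j by (simp add: Pm_def Qm_def scalar_prod_def)
  also have "\<dots> = (if i = j then 1 else 0)"
    unfolding Qsum[OF i] using i j by auto
  finally show "(Qm n * Pm n :: 'a mat) $$ (i,j) = 1\<^sub>m n $$ (i,j)" using i j by simp
qed (auto simp: Pm_def Qm_def)

lemma char_poly_redm:
  fixes A :: "'a::comm_ring_1 mat"
  assumes A: "A \<in> carrier_mat (Suc k) (Suc k)"
    and rs: "\<And>i. i < Suc k \<Longrightarrow> (\<Sum>j\<in>{0..<Suc k}. A $$ (i,j)) = 0"
  shows "char_poly A = [:0,1:] * char_poly (redm A)"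
proof -
  let ?n = "Suc k"
  define B where "B = four_block_mat (0\<^sub>m 1 1) (mat 1 k (\<lambda>(_,j). A $$ (0, Suc j))) (0\<^sub>m k 1) (redm A)"
  have P: "(Pm ?n :: 'a mat) \<in> carrier_mat ?n ?n" and Q: "(Qm ?n :: 'a mat) \<in> carrier_mat ?n ?n"
    by (auto simp: Pm_def Qm_def)
  have rA: "redm A \<in> carrier_mat k k" using A by (auto simp: redm_def)
  have B: "B \<in> carrier_mat ?n ?n" using rA by (auto simp: B_def)
  have AP: "(A * Pm ?n) $$ (r,j) = (if j = 0 then 0 else A $$ (r,j))" if "r < ?n" "j < ?n" for r j
  proof -
    have "(A * Pm ?n) $$ (r,j) = (\<Sum>l\<in>{0..<?n}. A $$ (r,l) * (if j = 0 \<or> l = j then 1 else 0))"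
      using A that by (simp add: Pm_def scalar_prod_def)
    also have "\<dots> = (if j = 0 then 0 else A $$ (r,j))" unfolding Psum[OF that(2)] using rs[OF that(1)] by simp
    finally show ?thesis .
  qed
  have QAP: "Qm ?n * (A * Pm ?n) = B"
  proof (rule eq_matI)
    fix i j assume "i < dim_row B" "j < dim_col B"
    hence i: "i < ?n" and j: "j < ?n" using B by auto
    have "(Qm ?n * (A * Pm ?n)) $$ (i,j) = (\<Sum>l\<in>{0..<?n}. (if i = l then 1 else if l = 0 then -1 else (0::'a)) * (A * Pm ?n) $$ (l,j))"
      using A i j by (simp add: Qm_def Pm_def scalar_prod_def)
    also have "\<dots> = (if i = 0 then (A * Pm ?n) $$ (0,j) else (A * Pm ?n) $$ (i,j) - (A * Pm ?n) $$ (0,j))"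
      by (rule Qsum[OF i])
    also have "\<dots> = B $$ (i,j)"
      using i j rA unfolding AP[OF i j] AP[OF zero_less_Suc j]
      by (cases i; cases j; auto simp: B_def redm_def A[THEN carrier_matD(1)])
    finally show "(Qm ?n * (A * Pm ?n)) $$ (i,j) = B $$ (i,j)" .
  qed (insert A B, auto simp: Qm_def Pm_def)
  have "A = Pm ?n * B * Qm ?n"
  proof -
    have "Pm ?n * B * Qm ?n = Pm ?n * (Qm ?n * (A * Pm ?n)) * Qm ?n" by (simp add: QAP)
    also have "\<dots> = (Pm ?n * Qm ?n) * A * (Pm ?n * Qm ?n)"
      using A P Q by (simp add: assoc_mult_mat[of _ ?n ?n _ ?n _ ?n])
    also have "\<dots> = A" using A by (simp add: PQ)
    finally show ?thesis by simp
  qed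
  hence "similar_mat A B"
    by (intro similar_matI[of A B "Pm ?n" "Qm ?n" ?n], insert A B P Q PQ QP, auto)
  hence "char_poly A = char_poly B" by (rule char_poly_similar)
  also have "\<dots> = char_poly (0\<^sub>m 1 1 :: 'a mat) * char_poly (redm A)"
    unfolding B_def by (rule char_poly_four_block_zeros_col, insert rA, auto)
  also have "char_poly (0\<^sub>m 1 1 :: 'a mat) = [:0,1:]"
    by (simp add: char_poly_defs det_def' [of _ 1] )
  finally show ?thesis .
qed

lemma proots_lin_prod: "proots (\<Prod>a\<leftarrow>as. [:- a, 1:]) = mset (as :: 'a::idom list)"
proof (induction as)
  case (Cons a as)
  have nz: "(\<Prod>a\<leftarrow>as. [:- a, 1:]) \<noteq> (0 :: 'a poly)"
    by (auto simp: prod_list_zero_iff)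
  define PP where "PP = (\<Prod>a\<leftarrow>as. [:- a, 1:])"
  have "proots ([:- a, 1:] * PP) = proots [:- a, 1:] + proots PP"
    by (rule proots_mult, auto simp: nz PP_def)
  then show ?case using Cons unfolding PP_def by simp
qed simp

lemma proots_shift:
  fixes B :: "complex mat"
  assumes B: "B \<in> carrier_mat k k"
  shows "proots (char_poly (c \<cdot>\<^sub>m 1\<^sub>m k - B)) = image_mset (\<lambda>x. c - x) (proots (char_poly B))"
proof -
  obtain es where es: "char_poly B = (\<Prod>a\<leftarrow>es. [:- a, 1:])" using char_poly_factorized[OF B] by blast
  define T where "T = schur_upper_triangular B es"
  have T: "T \<in> carrier_mat k k" "upper_triangular T" "similar_mat B T"
    using schur_upper_triangular[OF B es] unfolding T_def by auto
  obtain n P Q where PQ: "{B,T,P,Q} \<subseteq> carrier_mat n n" "P * Q = 1\<^sub>m n" "Q * P = 1\<^sub>m n" "B = P * T * Q"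
    using similar_matD[OF T(3)] by blast
  have nk: "n = k" using PQ(1) B by auto
  have P: "P \<in> carrier_mat k k" and Q: "Q \<in> carrier_mat k k" using PQ(1) nk by auto
  have I: "1\<^sub>m k \<in> carrier_mat k k" by simp
  have cI: "c \<cdot>\<^sub>m 1\<^sub>m k \<in> carrier_mat k k" by simp
  have "P * (c \<cdot>\<^sub>m 1\<^sub>m k - T) * Q = (P * (c \<cdot>\<^sub>m 1\<^sub>m k) - P * T) * Q"
    by (subst mult_minus_distrib_mat[OF P cI T(1)], rule refl)
  also have "\<dots> = P * (c \<cdot>\<^sub>m 1\<^sub>m k) * Q - P * T * Q"
    by (rule minus_mult_distrib_mat, insert P Q T(1), auto)
  also have "P * (c \<cdot>\<^sub>m 1\<^sub>m k) * Q = c \<cdot>\<^sub>m 1\<^sub>m k"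
  proof -
    have "P * (c \<cdot>\<^sub>m 1\<^sub>m k) = c \<cdot>\<^sub>m P" using mult_smult_distrib[OF P I] P by simp
    then show ?thesis using mult_smult_assoc_mat[OF P Q] PQ(2) nk by simp
  qed
  finally have sim: "c \<cdot>\<^sub>m 1\<^sub>m k - B = P * (c \<cdot>\<^sub>m 1\<^sub>m k - T) * Q" using PQ(4) by simp
  have "similar_mat (c \<cdot>\<^sub>m 1\<^sub>m k - B) (c \<cdot>\<^sub>m 1\<^sub>m k - T)"
    by (rule similar_matI[of _ _ P Q k], insert P Q PQ nk T(1) B sim, auto)
  hence cp1: "char_poly (c \<cdot>\<^sub>m 1\<^sub>m k - B) = char_poly (c \<cdot>\<^sub>m 1\<^sub>m k - T)" by (rule char_poly_similar)
  have ut: "upper_triangular (c \<cdot>\<^sub>m 1\<^sub>m k - T)" using T(1,2) unfolding upper_triangular_def by auto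
  have "char_poly (c \<cdot>\<^sub>m 1\<^sub>m k - T) = (\<Prod>a\<leftarrow>diag_mat (c \<cdot>\<^sub>m 1\<^sub>m k - T). [:- a, 1:])"
    by (rule char_poly_upper_triangular[OF _ ut, of k], insert T(1), auto)
  also have "diag_mat (c \<cdot>\<^sub>m 1\<^sub>m k - T) = map (\<lambda>x. c - x) (diag_mat T)"
    using T(1) by (auto simp: diag_mat_def)
  finally have cp2: "proots (char_poly (c \<cdot>\<^sub>m 1\<^sub>m k - B)) = mset (map (\<lambda>x. c - x) (diag_mat T))"
    using cp1 proots_lin_prod by metis
  have "char_poly B = char_poly T" by (rule char_poly_similar[OF T(3)])
  also have "\<dots> = (\<Prod>a\<leftarrow>diag_mat T. [:- a, 1:])" by (rule char_poly_upper_triangular[OF T(1,2)])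
  finally have "proots (char_poly B) = mset (diag_mat T)" using proots_lin_prod by metis
  with cp2 show ?thesis by simp
qed

lemma simple_compl: "simple_digraph n (complement n A)"
  unfolding simple_digraph_def complement_def by auto

lemma indeg_set: assumes "simple_digraph n A" "i < n"
  shows "{k. (k,i) \<in> A} = {j \<in> {0..<n} - {i}. (j,i) \<in> A}"
  using assms unfolding simple_digraph_def by auto

lemma indeg_compl: assumes s: "simple_digraph n A" and i: "i < n"
  shows "in_degree A i + in_degree (complement n A) i = n - 1"
proof -
  have "{k. (k,i) \<in> A} \<union> {k. (k,i) \<in> complement n A} = {0..<n} - {i}"
    using s i unfolding simple_digraph_def complement_def by auto
  moreover have "{k. (k,i) \<in> A} \<inter> {k. (k,i) \<in> complement n A} = {}"
    unfolding complement_def by auto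
  moreover have "finite {k. (k,i) \<in> A}" "finite {k. (k,i) \<in> complement n A}"
    using indeg_set[OF s i] indeg_set[OF simple_compl i] by auto
  ultimately have "card ({0..<n} - {i}) = in_degree A i + in_degree (complement n A) i"
    unfolding in_degree_def by (metis card_Un_disjoint)
  thus ?thesis using i by simp
qed

lemma lap_entry: "i < n \<Longrightarrow> j < n \<Longrightarrow> laplacian n A $$ (i,j) =
   (if i = j then of_nat (in_degree A i) else if (j, i) \<in> A then -1 else 0)"
  unfolding laplacian_def by simp

lemma lap_dims[simp]: "dim_row (laplacian n A) = n" "dim_col (laplacian n A) = n"
  unfolding laplacian_def by simp_all

lemma lap_carrier[simp]: "laplacian n A \<in> carrier_mat n n"
  unfolding laplacian_def by simp

lemma rowsum: assumes s: "simple_digraph n A" and i: "i < n"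
  shows "(\<Sum>j\<in>{0..<n}. laplacian n A $$ (i,j)) = 0"
proof -
  have "(\<Sum>j\<in>{0..<n}. laplacian n A $$ (i,j)) = laplacian n A $$ (i,i) + (\<Sum>j\<in>{0..<n} - {i}. laplacian n A $$ (i,j))"
    by (rule sum.remove, insert i, auto)
  also have "(\<Sum>j\<in>{0..<n} - {i}. laplacian n A $$ (i,j)) = (\<Sum>j\<in>{0..<n} - {i}. if (j,i) \<in> A then -1 else 0)"
    by (rule sum.cong, insert i, auto simp: lap_entry)
  also have "\<dots> = (\<Sum>j\<in>{j \<in> {0..<n} - {i}. (j,i) \<in> A}. -1)"
    by (rule sum.inter_filter[symmetric], auto)
  also have "\<dots> = - of_nat (in_degree A i)"
    unfolding in_degree_def indeg_set[OF s i] by simp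
  finally show ?thesis using i by (simp add: lap_entry)
qed

lemma lap_compl_entry: assumes s: "simple_digraph n A" and i: "i < n" and j: "j < n"
  shows "laplacian n A $$ (i,j) = (if i = j then of_nat n else 0) - 1 - laplacian n (complement n A) $$ (i,j)"
proof (cases "i = j")
  case True
  have "of_nat (in_degree A i) = (of_nat n :: complex) - 1 - of_nat (in_degree (complement n A) i)"
    using indeg_compl[OF s i] i by (simp add: of_nat_diff[symmetric] algebra_simps)
      (metis Suc_pred add.commute gr_implies_not0 linorder_neqE_nat not_less0 of_nat_Suc of_nat_add)
  then show ?thesis using True i by (simp add: lap_entry)
next
  case False
  then show ?thesis using i j s by (auto simp: lap_entry complement_def simple_digraph_def)
qed

lemma proots_x_mult: assumes "p \<noteq> 0" shows "proots ([:0,1:] * p) = add_mset (0::'a::idom) (proots p)"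
proof -
  have "proots ([:0,1:] * p) = proots [:0,1:] + proots p" by (rule proots_mult, insert assms, auto)
  moreover have "proots [:0::'a,1:] = {#0#}" using proots_linear_factor[of "0::'a"] by simp
  ultimately show ?thesis by simp
qed

lemma char_poly_nz: assumes "A \<in> carrier_mat k k" shows "char_poly (A :: 'a::field mat) \<noteq> 0"
proof -
  have "monic (char_poly A)" using degree_monic_char_poly[OF assms] by auto
  thus ?thesis by auto
qed

lemma spec:
  assumes s: "simple_digraph n A" and n: "n \<ge> 1"
  shows "\<exists>Q. proots (char_poly (laplacian n (complement n A))) = add_mset 0 Q \<and>
             proots (char_poly (laplacian n A)) = add_mset 0 (image_mset (\<lambda>x. of_nat n - x) Q)"
proof -
  obtain k where nk: "n = Suc k" using n by (cases n) auto
  let ?M = "laplacian n (complement n A)"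
  let ?N = "laplacian n A"
  have M: "?M \<in> carrier_mat (Suc k) (Suc k)" and N: "?N \<in> carrier_mat (Suc k) (Suc k)" using nk by auto
  have cM: "char_poly ?M = [:0,1:] * char_poly (redm ?M)"
    by (rule char_poly_redm[OF M], unfold nk[symmetric], rule rowsum[OF simple_compl])
  have cN: "char_poly ?N = [:0,1:] * char_poly (redm ?N)"
    by (rule char_poly_redm[OF N], unfold nk[symmetric], rule rowsum[OF s])
  have rM: "redm ?M \<in> carrier_mat k k" using nk by (auto simp: redm_def)
  have rN: "redm ?N = of_nat n \<cdot>\<^sub>m 1\<^sub>m k - redm ?M"
  proof -
    have s': "simple_digraph (Suc k) A" using s nk by simp
    show ?thesis by (rule eq_matI, insert nk, auto simp: redm_def lap_compl_entry[OF s'])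
  qed
  define Q where "Q = proots (char_poly (redm ?M))"
  have "proots (char_poly ?M) = add_mset 0 Q" unfolding cM Q_def
    by (rule proots_x_mult, rule char_poly_nz[OF rM])
  moreover have "proots (char_poly ?N) = add_mset 0 (image_mset (\<lambda>x. of_nat n - x) Q)"
    unfolding cN Q_def
    apply (subst proots_x_mult)
     apply (rule char_poly_nz[of _ k], simp add: redm_def nk)
    apply (simp add: rN proots_shift[OF rM])
    done
  ultimately show ?thesis by blast
qed

lemma perm_rank_id:
  fixes p :: "nat \<Rightarrow> nat" and \<rho> :: "nat \<Rightarrow> nat"
  assumes p: "p permutes {0..<n}"
    and arcs: "\<And>i. i < n \<Longrightarrow> p i \<noteq> i \<Longrightarrow> \<rho> (p i) < \<rho> i"
  shows "p = id"
proof (rule ccontr)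
  assume "p \<noteq> id"
  hence "\<exists>i. p i \<noteq> i" by (auto simp: fun_eq_iff)
  then obtain i where pi: "p i \<noteq> i" by blast
  hence i: "i \<in> {0..<n}" using p permutes_not_in by fastforce
  have le: "\<forall>j\<in>{0..<n}. \<rho> (p j) \<le> \<rho> j" using arcs by (metis atLeastLessThan_iff less_imp_le order_refl)
  have "(\<Sum>j\<in>{0..<n}. \<rho> (p j)) < (\<Sum>j\<in>{0..<n}. \<rho> j)"
    by (rule sum_strict_mono_ex1, simp, rule le, rule bexI[of _ i], insert arcs i pi, auto)
  moreover have "(\<Sum>j\<in>{0..<n}. \<rho> (p j)) = (\<Sum>j\<in>{0..<n}. \<rho> j)"
    by (rule sum.reindex_bij_betw, rule permutes_imp_bij[OF p])
  ultimately show False by simp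
qed

lemma char_poly_rank:
  assumes s: "simple_digraph n H"
    and rk: "\<And>u v. (u,v) \<in> H \<Longrightarrow> \<rho> u < (\<rho> v :: nat)"
  shows "char_poly (laplacian n H) = (\<Prod>a\<leftarrow>map (\<lambda>i. of_nat (in_degree H i)) [0..<n]. [:- a, 1:])"
proof -
  let ?M = "laplacian n H"
  let ?C = "char_poly_matrix ?M"
  have C: "?C \<in> carrier_mat n n" by simp
  have Cij: "?C $$ (i,j) = (if i = j then [:0,1:] else 0) + [:- ?M $$ (i,j):]" if "i < n" "j < n" for i j
    using that unfolding char_poly_matrix_def by auto
  have fin: "finite {p. p permutes {0..<n}}" by (rule finite_permutations, simp)
  have idp: "id \<in> {p. p permutes {0..<n}}" by (simp add: permutes_id)
  have "char_poly ?M = (\<Sum>p\<in>{p. p permutes {0..<n}}. signof p * (\<Prod>i = 0..<n. ?C $$ (i, p i)))"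
    unfolding char_poly_def by (rule det_def'[OF C])
  also have "\<dots> = signof id * (\<Prod>i = 0..<n. ?C $$ (i, id i)) +
       (\<Sum>p\<in>{p. p permutes {0..<n}} - {id}. signof p * (\<Prod>i = 0..<n. ?C $$ (i, p i)))"
    by (rule sum.remove[OF fin idp])
  also have "(\<Sum>p\<in>{p. p permutes {0..<n}} - {id}. signof p * (\<Prod>i = 0..<n. ?C $$ (i, p i))) = 0"
  proof (rule sum.neutral, rule ballI)
    fix p assume "p \<in> {p. p permutes {0..<n}} - {id}"
    hence p: "p permutes {0..<n}" and pid: "p \<noteq> id" by auto
    have "\<exists>i<n. p i \<noteq> i \<and> (p i, i) \<notin> H"
    proof (rule ccontr)
      assume "\<not> ?thesis"
      hence "\<And>i. i < n \<Longrightarrow> p i \<noteq> i \<Longrightarrow> \<rho> (p i) < \<rho> i" using rk by blast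
      with perm_rank_id[OF p] pid show False by blast
    qed
    then obtain i where i: "i < n" "p i \<noteq> i" "(p i, i) \<notin> H" by blast
    have pin: "p i < n" using permutes_in_image[OF p] i by auto
    have "?C $$ (i, p i) = 0" using Cij[OF i(1) pin] i pin by (simp add: lap_entry)
    hence "(\<Prod>i = 0..<n. ?C $$ (i, p i)) = 0" using i(1) by (intro prod_zero) auto
    thus "signof p * (\<Prod>i = 0..<n. ?C $$ (i, p i)) = 0" by simp
  qed
  also have "(\<Prod>i = 0..<n. ?C $$ (i, id i)) = (\<Prod>i = 0..<n. [:- of_nat (in_degree H i), 1:])"
    by (rule prod.cong, auto simp: Cij lap_entry)
  also have "\<dots> = (\<Prod>a\<leftarrow>map (\<lambda>i. of_nat (in_degree H i)) [0..<n]. [:- a, 1:])"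
  proof -
    have "(\<Prod>a\<leftarrow>map (\<lambda>i. of_nat (in_degree H i)) [0..<n]. [:- a, 1:])
        = prod_list (map (\<lambda>i. [:- of_nat (in_degree H i) :: complex, 1:]) [0..<n])" by (simp add: comp_def)
    also have "\<dots> = (\<Prod>i\<in>set [0..<n]. [:- of_nat (in_degree H i) :: complex, 1:])"
      by (rule prod.distinct_set_conv_list[symmetric], simp)
    finally show ?thesis by simp
  qed
  finally show ?thesis by (simp add: sign_id)
qed

lemma proots_rank:
  assumes s: "simple_digraph n H"
    and rk: "\<And>u v. (u,v) \<in> H \<Longrightarrow> \<rho> u < (\<rho> v :: nat)"
  shows "proots (char_poly (laplacian n H)) = mset (map (\<lambda>i. of_nat (in_degree H i)) [0..<n])"
  apply (subst char_poly_rank[of n H \<rho>, OF s rk])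
   apply assumption
  apply (rule proots_lin_prod)
  done

definition tr :: "'a::comm_ring_1 mat \<Rightarrow> 'a" where
  "tr X = (\<Sum>i\<in>{0..<dim_row X}. X $$ (i,i))"

lemma tr_comm: assumes X: "X \<in> carrier_mat a b" and Y: "Y \<in> carrier_mat b a"
  shows "tr (X * Y) = tr (Y * X)"
proof -
  have "tr (X * Y) = (\<Sum>i\<in>{0..<a}. \<Sum>k\<in>{0..<b}. X $$ (i,k) * Y $$ (k,i))"
    using X Y by (simp add: tr_def scalar_prod_def)
  also have "\<dots> = (\<Sum>k\<in>{0..<b}. \<Sum>i\<in>{0..<a}. Y $$ (k,i) * X $$ (i,k))"
    by (subst sum.swap, simp add: mult.commute)
  also have "\<dots> = tr (Y * X)"
    using X Y by (simp add: tr_def scalar_prod_def)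
  finally show ?thesis .
qed

lemma tr_similar: assumes "similar_mat A (B :: 'a::comm_ring_1 mat)" shows "tr A = tr B"
proof -
  obtain n P Q where PQ: "{A,B,P,Q} \<subseteq> carrier_mat n n" "P * Q = 1\<^sub>m n" "Q * P = 1\<^sub>m n" "A = P * B * Q"
    using similar_matD[OF assms] by blast
  hence A: "A \<in> carrier_mat n n" and B: "B \<in> carrier_mat n n" and P: "P \<in> carrier_mat n n" and Q: "Q \<in> carrier_mat n n" by auto
  have "tr A = tr (P * (B * Q))" using PQ(4) assoc_mult_mat[OF P B Q] by simp
  also have "\<dots> = tr ((B * Q) * P)" by (rule tr_comm[OF P], insert B Q, auto)
  also have "(B * Q) * P = B" using assoc_mult_mat[OF B Q P] PQ(3) B by simp
  finally show ?thesis .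
qed

lemma tr_upper_triangular: assumes "T \<in> carrier_mat k k"
  shows "tr T = sum_list (diag_mat T)"
  using assms unfolding tr_def diag_mat_def
  by (simp add: interv_sum_list_conv_sum_set_nat)

lemma in_deg_sum: assumes fH: "finite H" and fX: "finite X"
  shows "card {x \<in> H. snd x \<in> X} = (\<Sum>u\<in>X. in_degree H u)"
proof -
  have eq: "{x \<in> H. snd x \<in> X} = (\<Union>u\<in>X. (\<lambda>k. (k,u)) ` {k. (k,u) \<in> H})" by force
  have fin: "\<And>u. finite {k. (k,u) \<in> H}"
  proof -
    fix u have "{k. (k,u) \<in> H} \<subseteq> fst ` H" by force
    thus "finite {k. (k,u) \<in> H}" using fH finite_surj by blast
  qed
  have "card (\<Union>u\<in>X. (\<lambda>k. (k,u)) ` {k. (k,u) \<in> H}) = (\<Sum>u\<in>X. card ((\<lambda>k. (k,u)) ` {k. (k,u) \<in> H}))"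
    by (rule card_UN_disjoint[OF fX], insert fin, auto)
  also have "\<dots> = (\<Sum>u\<in>X. in_degree H u)"
    by (rule sum.cong, simp, subst card_image, auto simp: inj_on_def in_degree_def)
  finally show ?thesis using eq by simp
qed

lemma lift_left_eig:
  fixes M :: "complex mat"
  assumes M: "M \<in> carrier_mat n n" and f: "bij_betw f {0..<s} S" and Sn: "S \<subseteq> {0..<n}"
    and cl: "\<And>a j. a < s \<Longrightarrow> j < n \<Longrightarrow> j \<notin> S \<Longrightarrow> M $$ (f a, j) = 0"
    and ev: "eigenvalue (transpose_mat (mat s s (\<lambda>(a,b). M $$ (f a, f b)))) e"
  shows "eigenvalue (transpose_mat M) e"
proof -
  let ?B = "mat s s (\<lambda>(a,b). M $$ (f a, f b))"
  obtain w where w: "w \<in> carrier_vec s" "w \<noteq> 0\<^sub>v s" "transpose_mat ?B *\<^sub>v w = e \<cdot>\<^sub>v w"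
    using ev unfolding eigenvalue_def eigenvector_def by auto
  have wB: "(\<Sum>a\<in>{0..<s}. M $$ (f a, f b) * w $ a) = e * w $ b" if "b < s" for b
  proof -
    have "(transpose_mat ?B *\<^sub>v w) $ b = e * w $ b" using w(3) that w(1) by simp
    thus ?thesis using that w(1) by (simp add: scalar_prod_def mult.commute)
  qed
  define w' where "w' = vec n (\<lambda>i. \<Sum>a\<in>{0..<s}. if f a = i then w $ a else 0)"
  have fa: "\<And>a. a < s \<Longrightarrow> f a \<in> S" using f by (auto simp: bij_betw_def)
  have fan: "\<And>a. a < s \<Longrightarrow> f a < n" using fa Sn by (meson atLeastLessThan_iff subsetD)
  have finj: "inj_on f {0..<s}" using f by (auto simp: bij_betw_def)
  have w'f: "w' $ (f b) = w $ b" if "b < s" for b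
  proof -
    have "(\<Sum>a\<in>{0..<s}. if f a = f b then w $ a else 0) = (\<Sum>a\<in>{0..<s}. if a = b then w $ b else 0)"
      by (rule sum.cong, simp, insert finj that, auto simp: inj_on_def)
    also have "\<dots> = w $ b" using that by (simp add: sum.delta)
    finally show ?thesis unfolding w'_def using fan[OF that] by simp
  qed
  have w'out: "w' $ j = 0" if "j < n" "j \<notin> S" for j
    unfolding w'_def using that fa by (auto intro!: sum.neutral)
  have main: "(\<Sum>i\<in>{0..<n}. M $$ (i,j) * w' $ i) = (\<Sum>a\<in>{0..<s}. M $$ (f a, j) * w $ a)" if j: "j < n" for j
  proof -
    have "(\<Sum>i\<in>{0..<n}. M $$ (i,j) * w' $ i) = (\<Sum>i\<in>{0..<n}. \<Sum>a\<in>{0..<s}. if f a = i then M $$ (i,j) * w $ a else 0)"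
      unfolding w'_def by (rule sum.cong, simp, simp add: sum_distrib_left, rule sum.cong, auto)
    also have "\<dots> = (\<Sum>a\<in>{0..<s}. \<Sum>i\<in>{0..<n}. if i = f a then M $$ (f a,j) * w $ a else 0)"
      by (subst sum.swap, rule sum.cong, simp, rule sum.cong, auto)
    also have "\<dots> = (\<Sum>a\<in>{0..<s}. M $$ (f a, j) * w $ a)"
      by (rule sum.cong, simp, insert fan, simp add: sum.delta)
    finally show ?thesis .
  qed
  have w'c: "w' \<in> carrier_vec n" unfolding w'_def by simp
  have w'nz: "w' \<noteq> 0\<^sub>v n"
  proof
    assume z: "w' = 0\<^sub>v n"
    have "w = 0\<^sub>v s"
    proof (rule eq_vecI)
      fix b assume "b < dim_vec (0\<^sub>v s :: complex vec)"
      hence b: "b < s" by simp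
      have "w $ b = w' $ (f b)" using w'f[OF b] by simp
      also have "\<dots> = 0" using z fan[OF b] by simp
      finally show "w $ b = 0\<^sub>v s $ b" using b by simp
    qed (insert w(1), simp)
    with w(2) show False by simp
  qed
  have "transpose_mat M *\<^sub>v w' = e \<cdot>\<^sub>v w'"
  proof (rule eq_vecI)
    fix j assume "j < dim_vec (e \<cdot>\<^sub>v w')"
    hence j: "j < n" using w'c by simp
    have lhs: "(transpose_mat M *\<^sub>v w') $ j = (\<Sum>a\<in>{0..<s}. M $$ (f a, j) * w $ a)"
      using M j w'c main[OF j] by (simp add: scalar_prod_def)
    show "(transpose_mat M *\<^sub>v w') $ j = (e \<cdot>\<^sub>v w') $ j"
    proof (cases "j \<in> S")
      case True
      then obtain b where b: "b < s" "j = f b" using f by (auto simp: bij_betw_def)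
      show ?thesis unfolding lhs using wB[OF b(1)] w'f[OF b(1)] b j w'c by simp
    next
      case False
      have "(\<Sum>a\<in>{0..<s}. M $$ (f a, j) * w $ a) = 0" using cl[OF _ j False] by (auto intro!: sum.neutral)
      then show ?thesis unfolding lhs using w'out[OF j False] j w'c by simp
    qed
  qed (insert M w'c, simp)
  thus ?thesis unfolding eigenvalue_def eigenvector_def using w'c w'nz M by auto
qed

lemma in_proots_iff: assumes "p \<noteq> 0" shows "x \<in># proots p \<longleftrightarrow> poly p x = 0"
  using set_count_proots[OF assms] by blast

lemma cyc_root:
  assumes s: "simple_digraph n H" and v: "(v,v) \<in> H\<^sup>+"
  shows "\<exists>e. poly (char_poly (laplacian n H)) e = 0 \<and> Re e > 1"
proof -
  let ?M = "laplacian n H"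
  define S where "S = {u. (u,v) \<in> H\<^sup>+}"
  have Hn: "H \<subseteq> {0..<n} \<times> {0..<n}" and noloop: "\<And>i. (i,i) \<notin> H" using s unfolding simple_digraph_def by auto
  have finH: "finite H" using Hn finite_subset by blast
  have succ: "\<exists>w\<in>S. (u,w) \<in> H" if "u \<in> S" for u
  proof -
    from that have "(u,v) \<in> H\<^sup>+" unfolding S_def by simp
    then obtain w where w: "(u,w) \<in> H" "(w,v) \<in> H\<^sup>*" using tranclD by metis
    have "w \<in> S"
    proof (cases "w = v")
      case True thus ?thesis using v unfolding S_def by simp
    next
      case False thus ?thesis using w(2) unfolding S_def by (simp add: rtrancl_eq_or_trancl)
    qed
    thus ?thesis using w(1) by blast
  qed
  have Sn: "S \<subseteq> {0..<n}"
  proof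
    fix u assume "u \<in> S"
    then obtain w where "(u,w) \<in> H" using succ by blast
    thus "u \<in> {0..<n}" using Hn by auto
  qed
  have finS: "finite S" using Sn finite_subset by blast
  have vS: "v \<in> S" using v unfolding S_def by simp
  have closed: "j \<in> S" if "(j,i) \<in> H" "i \<in> S" for i j
    using that unfolding S_def by (auto intro: trancl_into_trancl2)
  obtain w where w: "w \<in> S" "(v,w) \<in> H" using succ[OF vS] by blast
  have "w \<noteq> v" using w noloop by blast
  hence "{v,w} \<subseteq> S" using vS w by auto
  hence "card {v,w} \<le> card S" by (rule card_mono[OF finS])
  hence s2: "card S \<ge> 2" using \<open>w \<noteq> v\<close> by simp
  obtain f where f: "bij_betw f {0..<card S} S" using ex_bij_betw_nat_finite[OF finS] by blast
  obtain k where k: "card S = Suc k" using s2 by (cases "card S") auto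
  have k1: "k \<ge> 1" using s2 k by simp
  have fa: "\<And>a. a < card S \<Longrightarrow> f a \<in> S" using f by (auto simp: bij_betw_def)
  have fan: "\<And>a. a < card S \<Longrightarrow> f a < n" using fa Sn by (meson atLeastLessThan_iff subsetD)
  have cl: "?M $$ (f a, j) = 0" if "a < card S" "j < n" "j \<notin> S" for a j
  proof -
    have "f a \<noteq> j" using fa[OF that(1)] that(3) by auto
    moreover have "(j, f a) \<notin> H" using closed[of j "f a"] fa[OF that(1)] that(3) by auto
    ultimately show ?thesis using lap_entry[OF fan[OF that(1)] that(2)] by simp
  qed
  define B where "B = mat (card S) (card S) (\<lambda>(a,b). ?M $$ (f a, f b))"
  have Bc: "B \<in> carrier_mat (Suc k) (Suc k)" unfolding B_def k by simp
  have rsB: "(\<Sum>b\<in>{0..<Suc k}. B $$ (a,b)) = 0" if a: "a < Suc k" for a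
  proof -
    have "(\<Sum>b\<in>{0..<Suc k}. B $$ (a,b)) = (\<Sum>b\<in>{0..<card S}. ?M $$ (f a, f b))"
      unfolding B_def k using a by simp
    also have "\<dots> = (\<Sum>j\<in>S. ?M $$ (f a, j))"
      by (rule sum.reindex_bij_betw[OF f])
    also have "\<dots> = (\<Sum>j\<in>{0..<n}. ?M $$ (f a, j))"
      by (rule sum.mono_neutral_left, simp, rule Sn, insert cl a k, auto)
    also have "\<dots> = 0" by (rule rowsum[OF s fan], insert a k, simp)
    finally show ?thesis .
  qed
  have cB: "char_poly B = [:0,1:] * char_poly (redm B)"
    by (rule char_poly_redm[OF Bc rsB])
  let ?R = "redm B"
  have Rc: "?R \<in> carrier_mat k k" using Bc by (auto simp: redm_def)
  obtain es where es: "char_poly ?R = (\<Prod>a\<leftarrow>es. [:- a, 1:])" using char_poly_factorized[OF Rc] by blast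
  define T where "T = schur_upper_triangular ?R es"
  have T: "T \<in> carrier_mat k k" "upper_triangular T" "similar_mat ?R T"
    using schur_upper_triangular[OF Rc es] unfolding T_def by auto
  have trR: "tr ?R = tr B"
  proof -
    have "tr ?R = (\<Sum>i\<in>{0..<k}. B $$ (Suc i, Suc i) - B $$ (0, Suc i))"
      using Bc by (simp add: tr_def redm_def)
    also have "\<dots> = (\<Sum>i\<in>{0..<k}. B $$ (Suc i, Suc i)) - (\<Sum>i\<in>{0..<k}. B $$ (0, Suc i))"
      by (simp add: sum_subtractf)
    also have "(\<Sum>i\<in>{0..<k}. B $$ (0, Suc i)) = - B $$ (0,0)"
      using rsB[of 0] by (simp add: sum.atLeast0_lessThan_Suc_shift del: sum.op_ivl_Suc) (simp add: eq_neg_iff_add_eq_0 add.commute)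
    also have "tr B = B $$ (0,0) + (\<Sum>i\<in>{0..<k}. B $$ (Suc i, Suc i))"
      using Bc by (simp add: tr_def sum.atLeast0_lessThan_Suc_shift del: sum.op_ivl_Suc)
    ultimately show ?thesis by simp
  qed
  have trB: "tr B = of_nat (\<Sum>u\<in>S. in_degree H u)"
  proof -
    have "tr B = (\<Sum>a\<in>{0..<card S}. ?M $$ (f a, f a))" unfolding B_def tr_def by simp
    also have "\<dots> = (\<Sum>a\<in>{0..<card S}. of_nat (in_degree H (f a)))"
      by (rule sum.cong, simp, simp add: lap_entry fan)
    also have "\<dots> = (\<Sum>u\<in>S. of_nat (in_degree H u))"
      by (rule sum.reindex_bij_betw[OF f])
    finally show ?thesis by simp
  qed
  have cnt: "(\<Sum>u\<in>S. in_degree H u) \<ge> card S"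
  proof -
    define g where "g u = (u, SOME w. w \<in> S \<and> (u,w) \<in> H)" for u
    have g: "g u \<in> {x \<in> H. snd x \<in> S}" if "u \<in> S" for u
      using someI_ex[OF succ[OF that, unfolded Bex_def]] unfolding g_def by auto
    have "inj_on g S" unfolding g_def inj_on_def by auto
    hence "card S \<le> card {x \<in> H. snd x \<in> S}"
      by (rule card_inj_on_le, insert g finH, auto)
    thus ?thesis using in_deg_sum[OF finH finS] by simp
  qed
  have trT: "tr T = (\<Sum>i\<in>{0..<k}. T $$ (i,i))" using T(1) by (simp add: tr_def)
  have eqT: "tr T = complex_of_nat (\<Sum>u\<in>S. in_degree H u)"
    using tr_similar[OF T(3)] trR trB by (simp del: of_nat_sum)
  have "Re (tr T) = real (\<Sum>u\<in>S. in_degree H u)" unfolding eqT by (simp del: of_nat_sum)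
  moreover have "real (Suc k) \<le> real (\<Sum>u\<in>S. in_degree H u)" using cnt k by (simp only: of_nat_le_iff)
  ultimately have "Re (tr T) \<ge> real (Suc k)" by linarith
  hence "(\<Sum>i\<in>{0..<k}. Re (T $$ (i,i))) > real k" unfolding trT Re_sum by simp
  then obtain i where i: "i < k" "Re (T $$ (i,i)) > 1"
  proof -
    assume r: "\<And>i. i < k \<Longrightarrow> 1 < Re (T $$ (i, i)) \<Longrightarrow> thesis"
    show thesis
    proof (rule ccontr)
      assume "\<not> thesis"
      hence "\<forall>i\<in>{0..<k}. Re (T $$ (i,i)) \<le> 1" using r by force
      hence "(\<Sum>i\<in>{0..<k}. Re (T $$ (i,i))) \<le> (\<Sum>i\<in>{0..<k}. (1::real))" by (intro sum_mono) auto
      with \<open>(\<Sum>i\<in>{0..<k}. Re (T $$ (i,i))) > real k\<close> show False by simp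
    qed
  qed
  let ?e = "T $$ (i,i)"
  have "char_poly ?R = char_poly T" by (rule char_poly_similar[OF T(3)])
  also have "\<dots> = (\<Prod>a\<leftarrow>diag_mat T. [:- a, 1:])" by (rule char_poly_upper_triangular[OF T(1,2)])
  finally have "proots (char_poly ?R) = mset (diag_mat T)" using proots_lin_prod by metis
  moreover have "?e \<in> set (diag_mat T)" using T(1) i by (auto simp: diag_mat_def)
  ultimately have "?e \<in># proots (char_poly ?R)" by simp
  hence "poly (char_poly ?R) ?e = 0" using in_proots_iff[OF char_poly_nz[OF Rc]] by blast
  hence "poly (char_poly B) ?e = 0" unfolding cB by simp
  hence "poly (char_poly (transpose_mat B)) ?e = 0" using Bc by simp
  hence "eigenvalue (transpose_mat B) ?e" using eigenvalue_root_char_poly[of "transpose_mat B" "Suc k"] Bc by simp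
  hence "eigenvalue (transpose_mat ?M) ?e"
    by (intro lift_left_eig[OF lap_carrier f Sn], insert cl, auto simp: B_def)
  hence "poly (char_poly (transpose_mat ?M)) ?e = 0"
    using eigenvalue_root_char_poly[of "transpose_mat ?M" n] by simp
  hence "poly (char_poly ?M) ?e = 0" using char_poly_transpose_mat[OF lap_carrier[of n H]] by simp
  thus ?thesis using i by blast
qed

lemma sorted2: assumes "size X \<ge> 2"
  obtains x0 x1 rest where "sorted_list_of_multiset X = x0 # x1 # rest"
proof -
  have "length (sorted_list_of_multiset X) \<ge> 2" using assms by (metis mset_sorted_list_of_multiset size_mset)
  then show ?thesis using that by (cases "sorted_list_of_multiset X"; cases "tl (sorted_list_of_multiset X)") auto
qed

lemma sorted_second_le:
  fixes a b :: "'a::linorder"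
  assumes b: "b \<in># Y"
  shows "sorted_list_of_multiset (add_mset a Y) ! 1 \<le> max a b"
proof -
  let ?X = "add_mset a Y"
  have "size ?X \<ge> 2" using b by (metis One_nat_def Suc_1 Suc_le_mono multi_member_split size_add_mset zero_less_Suc less_eq_Suc_le)
  then obtain x0 x1 rest where xs: "sorted_list_of_multiset ?X = x0 # x1 # rest" by (rule sorted2)
  have srt: "sorted (x0 # x1 # rest)" using sorted_sorted_list_of_multiset[of ?X] xs by simp
  have ms: "mset (x0 # x1 # rest) = ?X" by (metis xs mset_sorted_list_of_multiset)
  have ge: "\<And>y. y \<in> set (x1 # rest) \<Longrightarrow> x1 \<le> y" using srt by auto
  show ?thesis
  proof (cases "a = x0")
    case True
    hence "mset (x1 # rest) = Y" using ms by simp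
    hence "b \<in> set (x1 # rest)" using b by (metis set_mset_mset)
    hence "x1 \<le> b" by (rule ge)
    thus ?thesis unfolding xs by (simp add: le_max_iff_disj)
  next
    case False
    have "a \<in># mset (x0 # x1 # rest)" using ms by simp
    hence "a \<in> set (x1 # rest)" using False by auto
    hence "x1 \<le> a" by (rule ge)
    thus ?thesis unfolding xs by (simp add: le_max_iff_disj)
  qed
qed

lemma sorted_second_eq:
  fixes a b :: "'a::linorder"
  assumes b: "b \<in># Y" and amin: "\<And>y. y \<in># Y \<Longrightarrow> a \<le> y" and bmin: "\<And>y. y \<in># Y \<Longrightarrow> b \<le> y"
  shows "sorted_list_of_multiset (add_mset a Y) ! 1 = b"
proof -
  let ?X = "add_mset a Y"
  have "size ?X \<ge> 2" using b by (metis One_nat_def Suc_1 Suc_le_mono multi_member_split size_add_mset zero_less_Suc less_eq_Suc_le)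
  then obtain x0 x1 rest where xs: "sorted_list_of_multiset ?X = x0 # x1 # rest" by (rule sorted2)
  have srt: "sorted (x0 # x1 # rest)" using sorted_sorted_list_of_multiset[of ?X] xs by simp
  have ms: "mset (x0 # x1 # rest) = ?X" by (metis xs mset_sorted_list_of_multiset)
  have ge0: "\<And>y. y \<in> set (x1 # rest) \<Longrightarrow> x0 \<le> y" using srt by auto
  have ge: "\<And>y. y \<in> set rest \<Longrightarrow> x1 \<le> y" using srt by auto
  have "a \<in># mset (x0 # x1 # rest)" using ms by simp
  hence "x0 \<le> a" using ge0 by auto
  moreover have "x0 \<in># ?X" using ms[symmetric] by simp
  hence "a \<le> x0" using amin by auto
  ultimately have a0: "a = x0" by simp
  hence Y: "mset (x1 # rest) = Y" using ms by simp
  hence "x1 \<in># Y" by (metis list.set_intros(1) set_mset_mset)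
  hence "b \<le> x1" using bmin by simp
  moreover have "b \<in> set (x1 # rest)" using b Y by (metis set_mset_mset)
  hence "x1 \<le> b" using ge by auto
  ultimately show ?thesis using xs by simp
qed

lemma alg_lt:
  assumes s: "simple_digraph n A" and n: "n \<ge> 2"
    and e: "poly (char_poly (laplacian n (complement n A))) e = 0" "Re e > 1"
  shows "alg_conn n A < real n - 1"
proof -
  obtain Q where Q: "proots (char_poly (laplacian n (complement n A))) = add_mset 0 Q"
     "proots (char_poly (laplacian n A)) = add_mset 0 (image_mset (\<lambda>x. of_nat n - x) Q)"
    using spec[OF s] n by auto
  have "e \<in># add_mset 0 Q" unfolding Q(1)[symmetric]
    using in_proots_iff[OF char_poly_nz[OF lap_carrier]] e(1) by blast
  moreover have "e \<noteq> 0" using e(2) by auto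
  ultimately have "e \<in># Q" by simp
  hence h1: "of_nat n - e \<in># image_mset (\<lambda>x. of_nat n - x) Q" by (metis image_eqI set_image_mset)
  hence "Re (of_nat n - e) \<in># image_mset Re (image_mset (\<lambda>x. of_nat n - x) Q)" by (metis image_eqI set_image_mset)
  hence "alg_conn n A \<le> max (Re 0) (Re (of_nat n - e))"
    unfolding alg_conn_def Q(2) image_mset_add_mset by (rule sorted_second_le)
  also have "\<dots> < real n - 1" using e(2) n by simp
  finally show ?thesis .
qed

lemma rank_acyclic:
  assumes fH: "finite H" and ac: "acyclic H" and uv: "(u,v) \<in> H"
  shows "card {w. (w,u) \<in> H\<^sup>+} < card {w. (w,v) \<in> H\<^sup>+}"
proof (rule psubset_card_mono)
  have "{w. (w,v) \<in> H\<^sup>+} \<subseteq> fst ` H" by (force dest: tranclD)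
  thus "finite {w. (w,v) \<in> H\<^sup>+}" using fH finite_subset by blast
  have "u \<notin> {w. (w,u) \<in> H\<^sup>+}" using ac unfolding acyclic_def by auto
  moreover have "u \<in> {w. (w,v) \<in> H\<^sup>+}" using uv by auto
  moreover have "{w. (w,u) \<in> H\<^sup>+} \<subseteq> {w. (w,v) \<in> H\<^sup>+}" using uv by (auto intro: trancl_into_trancl)
  ultimately show "{w. (w,u) \<in> H\<^sup>+} \<subset> {w. (w,v) \<in> H\<^sup>+}" by blast
qed

lemma simple_finite: "simple_digraph n H \<Longrightarrow> finite H"
  unfolding simple_digraph_def by (meson finite_SigmaI finite_atLeastLessThan finite_subset)

lemma card_H_sum: assumes s: "simple_digraph n H"
  shows "card H = (\<Sum>u\<in>{0..<n}. in_degree H u)"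
proof -
  have "{x \<in> H. snd x \<in> {0..<n}} = H" using s unfolding simple_digraph_def by auto
  thus ?thesis using in_deg_sum[OF simple_finite[OF s], of "{0..<n}"] by simp
qed

lemma alg_eq:
  assumes s: "simple_digraph n A" and n: "n \<ge> 2"
    and ac: "acyclic (complement n A)" and d1: "\<And>i. i < n \<Longrightarrow> in_degree (complement n A) i \<le> 1"
    and ne: "card (complement n A) \<ge> 1"
  shows "alg_conn n A = real n - 1"
proof -
  let ?H = "complement n A"
  have sH: "simple_digraph n ?H" by (rule simple_compl)
  obtain Q where Q: "proots (char_poly (laplacian n ?H)) = add_mset 0 Q"
     "proots (char_poly (laplacian n A)) = add_mset 0 (image_mset (\<lambda>x. of_nat n - x) Q)"
    using spec[OF s] n by auto
  have pr: "proots (char_poly (laplacian n ?H)) = mset (map (\<lambda>i. of_nat (in_degree ?H i)) [0..<n])"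
    by (rule proots_rank[OF sH, of "\<lambda>v. card {w. (w,v) \<in> ?H\<^sup>+}"], rule rank_acyclic[OF simple_finite[OF sH] ac])
  have Q01: "x = 0 \<or> x = 1" if "x \<in># Q" for x
  proof -
    have "x \<in># proots (char_poly (laplacian n ?H))" using Q(1) that by simp
    then obtain i where "i < n" "x = of_nat (in_degree ?H i)" unfolding pr by auto
    thus ?thesis using d1 by (metis le_neq_implies_less less_one of_nat_1 of_nat_0 order.refl[THEN le_neq_implies_less, OF ] )
  qed
  have "\<exists>i<n. in_degree ?H i \<ge> 1"
  proof (rule ccontr)
    assume "\<not> ?thesis"
    hence "\<forall>i\<in>{0..<n}. in_degree ?H i = 0" by auto
    hence "card ?H = 0" unfolding card_H_sum[OF sH] by simp
    thus False using ne by simp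
  qed
  then obtain i where i: "i < n" "in_degree ?H i = 1" using d1 by (metis le_antisym)
  have "1 \<in># proots (char_poly (laplacian n ?H))" unfolding pr using i by (auto intro!: image_eqI[of _ _ i])
  hence "1 \<in># Q" using Q(1) by simp
  show ?thesis unfolding alg_conn_def Q(2) image_mset_add_mset
  proof (rule sorted_second_eq)
    show "real n - 1 \<in># image_mset Re (image_mset (\<lambda>x. of_nat n - x) Q)"
    proof -
      have "of_nat n - 1 \<in># image_mset (\<lambda>x. of_nat n - x) Q" using \<open>1 \<in># Q\<close> by (metis image_eqI set_image_mset)
      hence "Re (of_nat n - 1) \<in># image_mset Re (image_mset (\<lambda>x. of_nat n - x) Q)" by (metis image_eqI set_image_mset)
      moreover have "Re (of_nat n - 1) = real n - 1" by simp
      ultimately show ?thesis by simp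
    qed
    fix y assume "y \<in># image_mset Re (image_mset (\<lambda>x. of_nat n - x) Q)"
    then obtain x where x: "x \<in># Q" "y = Re (of_nat n - x)" by auto
    show "Re 0 \<le> y" using Q01[OF x(1)] x(2) n by auto
    show "real n - 1 \<le> y" using Q01[OF x(1)] x(2) n by auto
  qed
qed

lemma simple_finite': "simple_digraph n H \<Longrightarrow> finite H"
  unfolding simple_digraph_def by (meson finite_SigmaI finite_atLeastLessThan finite_subset)

lemma preds_finite: "finite H \<Longrightarrow> finite {k. (k,u) \<in> H}"
proof -
  assume "finite H"
  moreover have "{k. (k,u) \<in> H} \<subseteq> fst ` H" by force
  ultimately show ?thesis using finite_surj by blast
qed

lemma indeg_pos: "finite H \<Longrightarrow> (x,u) \<in> H \<Longrightarrow> in_degree H u \<ge> 1"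
  unfolding in_degree_def using preds_finite[of H u]
  by (metis (mono_tags, lifting) One_nat_def Suc_leI card_gt_0_iff empty_iff mem_Collect_eq)

lemma indeg_le1: "finite H \<Longrightarrow> in_degree H u \<le> 1 \<Longrightarrow> (x,u) \<in> H \<Longrightarrow> (y,u) \<in> H \<Longrightarrow> x = y"
  unfolding in_degree_def using preds_finite[of H u] card_le_Suc0_iff_eq[of "{k. (k,u) \<in> H}"] by auto

lemma cycle_back:
  assumes fH: "finite H" and d1: "\<And>u. in_degree H u \<le> 1" and c: "(c,c) \<in> H\<^sup>+"
    and x: "(x,c) \<in> H\<^sup>*"
  shows "(c,x) \<in> H\<^sup>*"
  using x
proof (induction rule: converse_rtrancl_induct)
  case base
  then show ?case by simp
next
  case (step x y)
  show ?case
  proof (cases "y = c")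
    case True
    obtain z where z: "(c,z) \<in> H\<^sup>*" "(z,c) \<in> H" using tranclD2[OF c] by blast
    have "x = z" using indeg_le1[OF fH d1 _ z(2)] step(1) True by simp
    thus ?thesis using z by simp
  next
    case False
    then obtain z where z: "(c,z) \<in> H\<^sup>*" "(z,y) \<in> H" using step(3) by (metis rtranclE)
    have "x = z" using indeg_le1[OF fH d1 step(1) z(2)] .
    thus ?thesis using z by simp
  qed
qed

lemma part_unique: "partition_on A P \<Longrightarrow> S1 \<in> P \<Longrightarrow> S2 \<in> P \<Longrightarrow> x \<in> S1 \<Longrightarrow> x \<in> S2 \<Longrightarrow> S1 = S2"
  using partition_onD2 disjointD by fastforce

lemma forest_props:
  assumes s: "simple_digraph n H" and F: "directed_forest n H k"
  shows "acyclic H" "\<And>u. in_degree H u \<le> 1"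
proof -
  have fH: "finite H" by (rule simple_finite'[OF s])
  obtain P where P: "partition_on {0..<n} P" "card P = k"
    and within: "\<And>i j. (i,j) \<in> H \<Longrightarrow> \<exists>S\<in>P. i \<in> S \<and> j \<in> S"
    and trees: "\<And>S. S \<in> P \<Longrightarrow> directed_tree S (H \<inter> S \<times> S)"
    using F unfolding directed_forest_def by fast
  have Hn: "H \<subseteq> {0..<n} \<times> {0..<n}" using s unfolding simple_digraph_def by auto
  have preds_in: "{k. (k,u) \<in> H} = {k. (k,u) \<in> H \<inter> S \<times> S}" if "S \<in> P" "u \<in> S" for S u
  proof -
    have "k \<in> S" if kH: "(k,u) \<in> H" for k
    proof -
      obtain S' where "S' \<in> P" "k \<in> S'" "u \<in> S'" using within[OF kH] by blast
      thus ?thesis using part_unique[OF P(1) _ \<open>S \<in> P\<close>] \<open>u \<in> S\<close> by blast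
    qed
    thus ?thesis using that by auto
  qed
  have tree_deg: "in_degree H u \<le> 1 \<and> (u = r \<longrightarrow> in_degree H u = 0)"
    if S: "S \<in> P" and r: "r \<in> S" "\<forall>v\<in>S. (r,v) \<in> (H \<inter> S \<times> S)\<^sup>*" and cE: "card (H \<inter> S \<times> S) = card S - 1"
      and u: "u \<in> S" for S r u
  proof -
    let ?E = "H \<inter> S \<times> S"
    have finS: "finite S" using S P(1) unfolding partition_on_def by (metis Union_upper finite_atLeastLessThan finite_subset)
    have fE: "finite ?E" using fH by simp
    have degs: "in_degree H v = in_degree ?E v" if "v \<in> S" for v
      unfolding in_degree_def using preds_in[OF S that] by simp
    have sumE: "card ?E = (\<Sum>v\<in>S. in_degree ?E v)"
    proof -
      have "{x \<in> ?E. snd x \<in> S} = ?E" by auto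
      thus ?thesis using in_deg_sum[OF fE finS] by simp
    qed
    have pos: "in_degree ?E v \<ge> 1" if "v \<in> S - {r}" for v
    proof -
      have "(r,v) \<in> ?E\<^sup>*" "v \<noteq> r" using r that by auto
      then obtain x where "(x,v) \<in> ?E" by (metis rtranclE)
      thus ?thesis by (rule indeg_pos[OF fE])
    qed
    have split: "(\<Sum>v\<in>S. in_degree ?E v) = in_degree ?E r + (\<Sum>v\<in>S - {r}. in_degree ?E v)"
      by (rule sum.remove[OF finS r(1)])
    have "(\<Sum>v\<in>S - {r}. in_degree ?E v - 1) = (\<Sum>v\<in>S - {r}. in_degree ?E v) - (\<Sum>v\<in>S - {r}. 1)"
      by (rule sum_subtractf_nat, insert pos, auto)
    also have "(\<Sum>v\<in>S - {r}. (1::nat)) = card S - 1" using finS r(1) by simp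
    finally have eq1: "(\<Sum>v\<in>S - {r}. in_degree ?E v - 1) = (\<Sum>v\<in>S - {r}. in_degree ?E v) - (card S - 1)" .
    have "(\<Sum>v\<in>S - {r}. (1::nat)) \<le> (\<Sum>v\<in>S - {r}. in_degree ?E v)" by (rule sum_mono, rule pos)
    hence ge: "card S - 1 \<le> (\<Sum>v\<in>S - {r}. in_degree ?E v)" using finS r(1) by simp
    have "(\<Sum>v\<in>S - {r}. in_degree ?E v - 1) + in_degree ?E r = 0"
      using eq1 ge split sumE cE by linarith
    hence z: "in_degree ?E r = 0" "\<And>v. v \<in> S - {r} \<Longrightarrow> in_degree ?E v - 1 = 0"
      using finS by auto
    show ?thesis
    proof (cases "u = r")
      case True thus ?thesis using z(1) degs u by simp
    next
      case False thus ?thesis using z(2)[of u] degs u by simp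
    qed
  qed
  have deg_le: "in_degree H u \<le> 1" for u
  proof (cases "u < n")
    case True
    hence "u \<in> \<Union>P" using P(1) unfolding partition_on_def by auto
    then obtain S where S: "S \<in> P" "u \<in> S" by blast
    obtain r where r: "r \<in> S" "\<forall>v\<in>S. (r,v) \<in> (H \<inter> S \<times> S)\<^sup>*" and cE: "card (H \<inter> S \<times> S) = card S - 1"
      using trees[OF S(1)] unfolding directed_tree_def by blast
    show ?thesis using tree_deg[OF S(1) r cE S(2)] by simp
  next
    case False
    hence "{k. (k,u) \<in> H} = {}" using Hn by auto
    thus ?thesis unfolding in_degree_def by simp
  qed
  thus "\<And>u. in_degree H u \<le> 1" .
  show "acyclic H" unfolding acyclic_def
  proof (intro allI notI)
    fix c assume c: "(c,c) \<in> H\<^sup>+"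
    then obtain z where "(c,z) \<in> H" using tranclD by metis
    hence "c < n" using Hn by auto
    hence "c \<in> \<Union>P" using P(1) unfolding partition_on_def by auto
    then obtain S where S: "S \<in> P" "c \<in> S" by blast
    obtain r where r: "r \<in> S" "\<forall>v\<in>S. (r,v) \<in> (H \<inter> S \<times> S)\<^sup>*" and cE: "card (H \<inter> S \<times> S) = card S - 1"
      using trees[OF S(1)] unfolding directed_tree_def by blast
    have "(r,c) \<in> (H \<inter> S \<times> S)\<^sup>*" using r S by blast
    hence rc: "(r,c) \<in> H\<^sup>*" by (rule rtrancl_mono[THEN subsetD, rotated], auto)
    have cr: "(c,r) \<in> H\<^sup>*" by (rule cycle_back[OF fH deg_le c rc])
    have "(r,r) \<in> H\<^sup>+" using rc c cr by (meson rtrancl_trancl_trancl trancl_rtrancl_trancl)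
    then obtain y where "(y,r) \<in> H" using tranclD2 by metis
    hence "in_degree H r \<ge> 1" by (rule indeg_pos[OF fH])
    moreover have "in_degree H r = 0" using tree_deg[OF S(1) r cE r(1)] by simp
    ultimately show False by simp
  qed
qed

lemma forest_of:
  assumes s: "simple_digraph n H" and ac: "acyclic H" and d1: "\<And>u. in_degree H u \<le> 1"
  shows "directed_forest n H (n - card H)"
proof -
  have fH: "finite H" by (rule simple_finite'[OF s])
  have Hn: "H \<subseteq> {0..<n} \<times> {0..<n}" using s unfolding simple_digraph_def by auto
  have nopred: "(x,r) \<notin> H" if "in_degree H r = 0" for x r
    using indeg_pos[OF fH, of x r] that by auto
  define R where "R = {r \<in> {0..<n}. in_degree H r = 0}"
  define T where "T r = {v. (r,v) \<in> H\<^sup>*}" for r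
  define \<rho> where "\<rho> v = card {w. (w,v) \<in> H\<^sup>+}" for v
  have Tn: "T r \<subseteq> {0..<n}" if "r < n" for r
  proof
    fix v assume "v \<in> T r"
    hence "(r,v) \<in> H\<^sup>*" unfolding T_def by simp
    thus "v \<in> {0..<n}" using that Hn by (cases rule: rtranclE) auto
  qed
  have root_ex: "\<exists>r\<in>R. (r,v) \<in> H\<^sup>*" if "v < n" for v
    using that
  proof (induction "\<rho> v" arbitrary: v rule: less_induct)
    case less
    show ?case
    proof (cases "in_degree H v = 0")
      case True
      thus ?thesis using less.prems unfolding R_def by auto
    next
      case False
      hence "{k. (k,v) \<in> H} \<noteq> {}" unfolding in_degree_def by (metis card.empty)
      then obtain x where x: "(x,v) \<in> H" by auto
      have "\<rho> x < \<rho> v" unfolding \<rho>_def by (rule rank_acyclic[OF fH ac x])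
      moreover have "x < n" using x Hn by auto
      ultimately obtain r where "r \<in> R" "(r,x) \<in> H\<^sup>*" using less.hyps by blast
      thus ?thesis using x by (meson rtrancl.rtrancl_into_rtrancl)
    qed
  qed
  have root_uniq: "r1 = r2" if r1: "r1 \<in> R" and r2: "r2 \<in> R" and p1: "(r1,v) \<in> H\<^sup>*" and p2: "(r2,v) \<in> H\<^sup>*" for r1 r2 v
    using p1 p2 r2
  proof (induction arbitrary: r2 rule: rtrancl_induct)
    case base
    from base(1) show ?case
    proof (cases rule: rtranclE)
      case (step y)
      thus ?thesis using nopred r1 unfolding R_def by auto
    qed simp
  next
    case (step y z)
    have r2R: "r2 \<in> R" by (rule step.prems(2))
    from step.prems(1) show ?case
    proof (cases rule: rtranclE)
      case base
      thus ?thesis using step.hyps(2) nopred r2R unfolding R_def by auto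
    next
      case (step y')
      have "y' = y" using indeg_le1[OF fH d1 step(2)] \<open>(y,z) \<in> H\<close> .
      thus ?thesis using step.IH step(1) r2R by simp
    qed
  qed
  have Rn: "\<And>r. r \<in> R \<Longrightarrow> r < n" unfolding R_def by auto
  have rT: "\<And>r. r \<in> T r" unfolding T_def by simp
  define P where "P = T ` R"
  have part: "partition_on {0..<n} P"
  proof (rule partition_onI)
    show "\<Union>P = {0..<n}"
    proof
      show "\<Union>P \<subseteq> {0..<n}" unfolding P_def using Tn Rn by blast
      show "{0..<n} \<subseteq> \<Union>P"
      proof
        fix v assume "v \<in> {0..<n}"
        then obtain r where "r \<in> R" "(r,v) \<in> H\<^sup>*" using root_ex by auto
        thus "v \<in> \<Union>P" unfolding P_def T_def by blast
      qed
    qed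
    show "disjnt p q" if pq: "p \<in> P" "q \<in> P" "p \<noteq> q" for p q
    proof -
      obtain r1 r2 where "r1 \<in> R" "r2 \<in> R" "p = T r1" "q = T r2" using pq(1,2) unfolding P_def by auto
      thus ?thesis using root_uniq pq(3) unfolding disjnt_def T_def by blast
    qed
    show "{} \<notin> P" unfolding P_def using rT by auto
  qed
  have injT: "inj_on T R"
  proof (rule inj_onI)
    fix r1 r2 assume "r1 \<in> R" "r2 \<in> R" "T r1 = T r2"
    thus "r1 = r2" using root_uniq[of r1 r2 r2] rT[of r2] unfolding T_def by auto
  qed
  have cardR: "card R = n - card H"
  proof -
    have "card H = (\<Sum>u\<in>{0..<n}. in_degree H u)" by (rule card_H_sum[OF s])
    also have "\<dots> = (\<Sum>u\<in>{0..<n}. if in_degree H u \<noteq> 0 then 1 else 0)"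
    proof (rule sum.cong)
      fix u show "in_degree H u = (if in_degree H u \<noteq> 0 then 1 else 0)" using d1[of u] by auto
    qed simp
    also have "\<dots> = (\<Sum>u\<in>{u \<in> {0..<n}. in_degree H u \<noteq> 0}. 1)"
      by (rule sum.inter_filter[symmetric], simp)
    also have "\<dots> = card ({0..<n} - R)" unfolding R_def by (simp, rule arg_cong[of _ _ card], auto)
    also have "\<dots> = n - card R" by (subst card_Diff_subset, auto simp: R_def)
    finally have "card H = n - card R" .
    moreover have "card R \<le> card {0..<n}" by (rule card_mono, simp, auto simp: R_def)
    ultimately show ?thesis by simp
  qed
  have within: "\<exists>S\<in>P. i \<in> S \<and> j \<in> S" if "(i,j) \<in> H" for i j
  proof -
    have "i < n" using that Hn by auto
    then obtain r where "r \<in> R" "(r,i) \<in> H\<^sup>*" using root_ex by blast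
    moreover hence "(r,j) \<in> H\<^sup>*" using that by (meson rtrancl.rtrancl_into_rtrancl)
    ultimately show ?thesis unfolding P_def T_def by blast
  qed
  have tree: "directed_tree S (H \<inter> S \<times> S)" if "S \<in> P" for S
  proof -
    obtain r where r: "r \<in> R" "S = T r" using \<open>S \<in> P\<close> unfolding P_def by auto
    let ?E = "H \<inter> S \<times> S"
    have finS: "finite S" using Tn[OF Rn[OF r(1)]] r(2) finite_subset by blast
    have reach: "(r,v) \<in> ?E\<^sup>*" if "(r,v) \<in> H\<^sup>*" for v
      using that
    proof (induction rule: rtrancl_induct)
      case (step y z)
      have "(y,z) \<in> ?E" using step r(2) unfolding T_def by (auto intro: rtrancl.rtrancl_into_rtrancl)
      thus ?case using step.IH by (meson rtrancl.rtrancl_into_rtrancl)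
    qed simp
    have Eeq: "{x \<in> H. snd x \<in> S} = ?E"
    proof
      show "?E \<subseteq> {x \<in> H. snd x \<in> S}" by auto
      show "{x \<in> H. snd x \<in> S} \<subseteq> ?E"
      proof
        fix x assume x: "x \<in> {x \<in> H. snd x \<in> S}"
        obtain k u where ku: "x = (k,u)" by fastforce
        have kuH: "(k,u) \<in> H" and uS: "u \<in> S" using x ku by auto
        have "k < n" using kuH Hn by auto
        then obtain r' where r': "r' \<in> R" "(r',k) \<in> H\<^sup>*" using root_ex by blast
        hence "(r',u) \<in> H\<^sup>*" using kuH by (meson rtrancl.rtrancl_into_rtrancl)
        hence "r' = r" using root_uniq[OF r'(1) r(1)] uS r(2) unfolding T_def by auto
        hence "k \<in> S" using r' r(2) unfolding T_def by simp
        thus "x \<in> ?E" using ku kuH uS by auto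
      qed
    qed
    have degS: "in_degree H u = (if u = r then 0 else 1)" if "u \<in> S" for u
    proof (cases "u = r")
      case True thus ?thesis using r(1) unfolding R_def by simp
    next
      case False
      have "(r,u) \<in> H\<^sup>*" using that r(2) unfolding T_def by simp
      then obtain x where "(x,u) \<in> H" using False by (metis rtranclE)
      hence "in_degree H u \<ge> 1" by (rule indeg_pos[OF fH])
      thus ?thesis using d1[of u] False by simp
    qed
    have "card ?E = (\<Sum>u\<in>S. in_degree H u)" using in_deg_sum[OF fH finS] Eeq by simp
    also have "\<dots> = (\<Sum>u\<in>S. if u = r then 0 else 1)" by (rule sum.cong, simp, rule degS)
    also have "\<dots> = card S - 1" using finS rT[of r] r(2)
      by (simp add: sum.If_cases Int_commute[of _ "- {r}"] Compl_eq_Diff_UNIV Int_Diff[symmetric])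
    finally have cE: "card ?E = card S - 1" .
    show ?thesis unfolding directed_tree_def
      using cE reach rT[of r] r(2) unfolding T_def by blast
  qed
  show ?thesis unfolding directed_forest_def
    by (rule exI[of _ P], insert part injT cardR within tree, auto simp: P_def card_image)
qed

lemma dichotomy:
  assumes s: "simple_digraph n A" and n: "n \<ge> 2" and ne: "card (complement n A) \<ge> 1"
  shows "(alg_conn n A = real n - 1 \<and> acyclic (complement n A) \<and> (\<forall>u. in_degree (complement n A) u \<le> 1))
       \<or> (alg_conn n A < real n - 1 \<and> \<not> (acyclic (complement n A) \<and> (\<forall>u. in_degree (complement n A) u \<le> 1)))"
proof -
  let ?H = "complement n A"
  have sH: "simple_digraph n ?H" by (rule simple_compl)
  have fH: "finite ?H" by (rule simple_finite'[OF sH])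
  show ?thesis
  proof (cases "acyclic ?H \<and> (\<forall>u. in_degree ?H u \<le> 1)")
    case True
    thus ?thesis using alg_eq[OF s n] ne by auto
  next
    case False
    have "\<exists>e. poly (char_poly (laplacian n ?H)) e = 0 \<and> Re e > 1"
    proof (cases "acyclic ?H")
      case False
      then obtain v where "(v,v) \<in> ?H\<^sup>+" unfolding acyclic_def by blast
      thus ?thesis by (rule cyc_root[OF sH])
    next
      case True
      with False obtain u where u: "in_degree ?H u > 1" by (auto simp: not_le)
      hence "{k. (k,u) \<in> ?H} \<noteq> {}" unfolding in_degree_def by (metis card.empty not_less0)
      then obtain x where "(x,u) \<in> ?H" by blast
      hence un: "u < n" unfolding complement_def by auto
      have pr: "proots (char_poly (laplacian n ?H)) = mset (map (\<lambda>i. of_nat (in_degree ?H i)) [0..<n])"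
        by (rule proots_rank[OF sH, of "\<lambda>v. card {w. (w,v) \<in> ?H\<^sup>+}"], rule rank_acyclic[OF fH True])
      have "of_nat (in_degree ?H u) \<in># proots (char_poly (laplacian n ?H))" unfolding pr using un by auto
      hence "poly (char_poly (laplacian n ?H)) (of_nat (in_degree ?H u)) = 0"
        using in_proots_iff[OF char_poly_nz[OF lap_carrier]] by blast
      moreover have "Re (of_nat (in_degree ?H u)) > 1" using u by simp
      ultimately show ?thesis by blast
    qed
    then obtain e where "poly (char_poly (laplacian n ?H)) e = 0" "Re e > 1" by blast
    hence "alg_conn n A < real n - 1" by (rule alg_lt[OF s n])
    thus ?thesis using False by blast
  qed
qed

lemma card_offdiag: "card {(i,j). i < n \<and> j < n \<and> i \<noteq> (j::nat)} = n * (n - 1)"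
proof -
  have eq: "{(i,j). i < n \<and> j < n \<and> i \<noteq> (j::nat)} = ({0..<n} \<times> {0..<n}) - (\<lambda>i. (i,i)) ` {0..<n}" by auto
  have "card (({0..<n} \<times> {0..<n}) - (\<lambda>i. (i,i)) ` {0..<n}) = card ({0..<n} \<times> {0..<n}) - card ((\<lambda>i. (i,i)) ` {0..<n})"
    by (rule card_Diff_subset, auto)
  also have "card ((\<lambda>i. (i,i)) ` {0..<n}) = n" by (subst card_image, auto simp: inj_on_def)
  finally show ?thesis unfolding eq by (simp add: card_cartesian_product diff_mult_distrib2)
qed

lemma card_compl: assumes s: "simple_digraph n A"
  shows "card (complement n A) = n * (n - 1) - card A"
proof -
  have "complement n A = {(i,j). i < n \<and> j < n \<and> i \<noteq> (j::nat)} - A" unfolding complement_def by auto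
  moreover have "A \<subseteq> {(i,j). i < n \<and> j < n \<and> i \<noteq> (j::nat)}" using s unfolding simple_digraph_def by auto
  ultimately show ?thesis using card_offdiag card_Diff_subset[OF simple_finite'[OF s]] by simp
qed

lemma compl_compl: "simple_digraph n A \<Longrightarrow> complement n (complement n A) = A"
  unfolding simple_digraph_def complement_def by auto

theorem theorem2:
  fixes n m :: nat
  assumes "n \<ge> 2" and "(n - 1)^2 \<le> m" and "m < n * (n - 1)"
  shows "(\<forall>A. simple_digraph n A \<and> card A = m \<longrightarrow> alg_conn n A \<le> real n - 1)
       \<and> (\<exists>A. simple_digraph n A \<and> card A = m \<and> alg_conn n A = real n - 1)
       \<and> (\<forall>A. simple_digraph n A \<and> card A = m \<longrightarrow>
            (alg_conn n A = real n - 1 \<longleftrightarrow>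
             directed_forest n (complement n A) (m - n * (n - 2))))"
proof -
  have n2: "n \<ge> 2" and m1: "(n - 1)^2 \<le> m" and m2: "m < n * (n - 1)" using assms by auto
  have X: "n * (n - 2) + n = n * (n - 1)"
  proof -
    obtain k where "n = Suc (Suc k)" using n2 by (metis add_2_eq_Suc le_Suc_ex)
    thus ?thesis by (simp add: algebra_simps)
  qed
  have Z: "n * (n - 1) = (n - 1)^2 + (n - 1)"
  proof -
    obtain k where "n = Suc k" using n2 by (cases n) auto
    thus ?thesis by (simp add: power2_eq_square algebra_simps)
  qed
  define h where "h = n * (n - 1) - m"
  have h1: "h \<ge> 1" and hn: "h \<le> n - 1" using m1 m2 Z unfolding h_def by linarith+
  have kh: "m - n * (n - 2) = n - h" using X Z m1 m2 unfolding h_def by linarith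
  have facts: "card (complement n A) = h \<and>
      ((alg_conn n A = real n - 1 \<and> acyclic (complement n A) \<and> (\<forall>u. in_degree (complement n A) u \<le> 1))
       \<or> (alg_conn n A < real n - 1 \<and> \<not> (acyclic (complement n A) \<and> (\<forall>u. in_degree (complement n A) u \<le> 1))))"
    if s: "simple_digraph n A" and cA: "card A = m" for A
  proof -
    have "card (complement n A) = h" using card_compl[OF s] cA unfolding h_def by simp
    thus ?thesis using dichotomy[OF s n2] h1 by auto
  qed
  have P1: "\<forall>A. simple_digraph n A \<and> card A = m \<longrightarrow> alg_conn n A \<le> real n - 1"
    using facts by fastforce
  have P3: "\<forall>A. simple_digraph n A \<and> card A = m \<longrightarrow>
            (alg_conn n A = real n - 1 \<longleftrightarrow> directed_forest n (complement n A) (m - n * (n - 2)))"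
  proof (intro allI impI)
    fix A assume sA: "simple_digraph n A \<and> card A = m"
    hence s: "simple_digraph n A" and cA: "card A = m" by auto
    have sH: "simple_digraph n (complement n A)" by (rule simple_compl)
    note f = facts[OF s cA]
    show "alg_conn n A = real n - 1 \<longleftrightarrow> directed_forest n (complement n A) (m - n * (n - 2))"
    proof
      assume "alg_conn n A = real n - 1"
      hence "acyclic (complement n A) \<and> (\<forall>u. in_degree (complement n A) u \<le> 1)" using f by auto
      hence "directed_forest n (complement n A) (n - card (complement n A))"
        by (intro forest_of[OF sH]) auto
      thus "directed_forest n (complement n A) (m - n * (n - 2))" using f kh by simp
    next
      assume F: "directed_forest n (complement n A) (m - n * (n - 2))"
      have "acyclic (complement n A)" "\<And>u. in_degree (complement n A) u \<le> 1"
        using forest_props[OF sH F] by auto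
      thus "alg_conn n A = real n - 1" using f by auto
    qed
  qed
  have P2: "\<exists>A. simple_digraph n A \<and> card A = m \<and> alg_conn n A = real n - 1"
  proof -
    define F where "F = (\<lambda>i. (0::nat, i)) ` {1..h}"
    have sF: "simple_digraph n F" unfolding simple_digraph_def F_def using hn n2 by auto
    have cF: "card F = h" unfolding F_def by (subst card_image, auto simp: inj_on_def)
    define A0 where "A0 = complement n F"
    have s0: "simple_digraph n A0" unfolding A0_def by (rule simple_compl)
    have cc: "complement n A0 = F" unfolding A0_def by (rule compl_compl[OF sF])
    have c0: "card A0 = m"
    proof -
      have "card F = n * (n - 1) - card A0" using card_compl[OF s0] cc by simp
      moreover have "card A0 \<le> n * (n - 1)" using card_compl[OF sF] unfolding A0_def by simp
      ultimately show ?thesis using cF m2 unfolding h_def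
        by (metis A0_def card_compl diff_diff_cancel less_imp_le sF)
    qed
    have acF: "acyclic F" unfolding acyclic_def
    proof (intro allI notI)
      fix v assume v: "(v,v) \<in> F\<^sup>+"
      obtain w where "(v,w) \<in> F" using tranclD[OF v] by blast
      hence "v = 0" unfolding F_def by auto
      obtain z where "(z,v) \<in> F" using tranclD2[OF v] by blast
      hence "v \<ge> 1" unfolding F_def by auto
      with \<open>v = 0\<close> show False by simp
    qed
    have dF: "in_degree F u \<le> 1" for u
    proof -
      have "{k. (k,u) \<in> F} \<subseteq> {0}" unfolding F_def by auto
      hence "card {k. (k,u) \<in> F} \<le> card {0::nat}" by (intro card_mono) auto
      thus ?thesis unfolding in_degree_def by simp
    qed
    have "alg_conn n A0 = real n - 1"
      using facts[OF s0 c0] acF dF cc by auto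
    thus ?thesis using s0 c0 by blast
  qed
  show ?thesis using P1 P2 P3 by blast
qed

end
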